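(* Suppose that the bivariate copula $A$ allows a continuous Markov kernel $K_A$. Then $$\lim_{N\to\infty}\sup_{(x,y)\in[0,1]^2}\left|K_{\mathcal{B}_N(A)}(x,[0,y])-K_A(x,[0,y])\right|=0,$$ i.e. $(\mathcal{B}_N(A))_{N\in\mathbb{N}}$ converges uniformly conditional to $A$.
   Context: A (bivariate) copula is a distribution function on $[0,1]^2$ with uniform marginals; each copula $B$ corresponds to a doubly stochastic measure $\mu_B$ with $B(x,y)=\mu_B([0,x]\times[0,y])$. A Markov kernel of $B$ is a map $K_B:[0,1]\times\mathcal{B}([0,1])\to[0,1]$, measurable in the first argument, a probability measure in the second, with $\int_{E_1}K_B(x,E_2)\,d\lambda(x)=\mu_B(E_1\times E_2)$ for all Borel $E_1,E_2$ ($\lambda$ = Lebesgue measure). $A$ allows a continuous Markov kernel if it has a version $K_A$ with $(x,y)\mapsto K_A(x,[0,y])$ continuous on $[0,1]^2$; $K_A$ denotes this version. Bernstein approximation: $p_{N,k}(u)=\binom Nk u^k(1-u)^{N-k}$ for $k\in\{0,\dots,N\}$ and $p_{N,k}\equiv0$ otherwise; $\mathcal{B}_N(A)(x,y)=\sum_{i,j=1}^N A(\tfrac iN,\tfrac jN)p_{N,i}(x)p_{N,j}(y)$, with Markov kernel version $K_{\mathcal{B}_N(A)}(x,[0,y])=N\sum_{i,j=1}^N A(\tfrac iN,\tfrac jN)\big(p_{N-1,i-1}(x)-p_{N-1,i}(x)\big)p_{N,j}(y)$. *)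

theory Defs
  imports "HOL-Probability.Probability"
begin

definition is_copula :: "(real \<Rightarrow> real \<Rightarrow> real) \<Rightarrow> bool" where
  "is_copula A \<longleftrightarrow>
     (\<forall>t\<in>{0..1}. A t 0 = 0 \<and> A 0 t = 0 \<and> A t 1 = t \<and> A 1 t = t) \<and>
     (\<forall>x1\<in>{0..1}. \<forall>x2\<in>{0..1}. \<forall>y1\<in>{0..1}. \<forall>y2\<in>{0..1}.
        x1 \<le> x2 \<longrightarrow> y1 \<le> y2 \<longrightarrow> A x2 y2 - A x1 y2 - A x2 y1 + A x1 y1 \<ge> 0)"

definition copula_measure :: "(real \<Rightarrow> real \<Rightarrow> real) \<Rightarrow> (real \<times> real) measure \<Rightarrow> bool" where
  "copula_measure A \<mu> \<longleftrightarrow>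
     sets \<mu> = sets borel \<and> finite_measure \<mu> \<and>
     emeasure \<mu> (UNIV - {0..1} \<times> {0..1}) = 0 \<and>
     (\<forall>x\<in>{0..1}. \<forall>y\<in>{0..1}. measure \<mu> ({0..x} \<times> {0..y}) = A x y)"

definition markov_kernel_of :: "(real \<Rightarrow> real \<Rightarrow> real) \<Rightarrow> (real \<Rightarrow> real measure) \<Rightarrow> bool" where
  "markov_kernel_of A K \<longleftrightarrow>
     (\<exists>\<mu>. copula_measure A \<mu> \<and>
       (\<forall>x\<in>{0..1}. prob_space (K x) \<and> sets (K x) = sets (restrict_space borel {0..1::real})) \<and>
       (\<forall>E\<in>sets (restrict_space borel {0..1::real}).
          (\<lambda>x. measure (K x) E) \<in> borel_measurable (restrict_space borel {0..1::real})) \<and>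
       (\<forall>E1\<in>sets (restrict_space borel {0..1::real}). \<forall>E2\<in>sets (restrict_space borel {0..1::real}).
          (LINT x:E1|lborel. measure (K x) E2) = measure \<mu> (E1 \<times> E2)))"

definition continuous_markov_kernel_of :: "(real \<Rightarrow> real \<Rightarrow> real) \<Rightarrow> (real \<Rightarrow> real measure) \<Rightarrow> bool" where
  "continuous_markov_kernel_of A K \<longleftrightarrow> markov_kernel_of A K \<and>
     continuous_on ({0..1} \<times> {0..1}) (\<lambda>(x, y). measure (K x) {0..y})"

definition bern :: "nat \<Rightarrow> nat \<Rightarrow> real \<Rightarrow> real" where
  "bern N k u = (if k \<le> N then real (N choose k) * u ^ k * (1 - u) ^ (N - k) else 0)"

text \<open>The Markov kernel version K_{B_N(A)}(x,[0,y]) of the Bernstein approximation.\<close>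
definition bernstein_kernel :: "nat \<Rightarrow> (real \<Rightarrow> real \<Rightarrow> real) \<Rightarrow> real \<Rightarrow> real \<Rightarrow> real" where
  "bernstein_kernel N A x y =
     real N * (\<Sum>i=1..N. \<Sum>j=1..N. A (real i / real N) (real j / real N) *
        (bern (N - 1) (i - 1) x - bern (N - 1) i x) * bern N j y)"

end

theory Submission
  imports Defs
begin


lemma bern_eq: "k \<le> N \<Longrightarrow> bern N k u = Bernstein N k u"
  by (simp add: bern_def Bernstein_def)

lemma sum_shift_x:
  fixes g :: "nat \<Rightarrow> real"
  assumes "g 0 = 0" "N \<ge> 1"
  shows "(\<Sum>i=1..N. g i * (bern (N-1) (i-1) x - bern (N-1) i x))
       = (\<Sum>i<N. (g (Suc i) - g i) * Bernstein (N-1) i x)"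
proof -
  have 1: "(\<Sum>i=1..N. g i * bern (N-1) (i-1) x) = (\<Sum>i<N. g (Suc i) * Bernstein (N-1) i x)"
  proof -
    have "(\<Sum>i=1..N. g i * bern (N-1) (i-1) x) = (\<Sum>i=0..N-1. g (Suc i) * bern (N-1) i x)"
    proof -
      obtain M where M: "N = Suc M" using assms(2) by (cases N) auto
      show ?thesis unfolding M using sum.shift_bounds_cl_Suc_ivl[of "\<lambda>i. g i * bern M (i-1) x" 0 M]
        by simp
    qed
    also have "\<dots> = (\<Sum>i<N. g (Suc i) * Bernstein (N-1) i x)"
      using assms(2) by (intro sum.cong) (auto simp: bern_eq)
    finally show ?thesis .
  qed
  have 2: "(\<Sum>i=1..N. g i * bern (N-1) i x) = (\<Sum>i<N. g i * Bernstein (N-1) i x)"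
  proof -
    have "(\<Sum>i=1..N. g i * bern (N-1) i x) = (\<Sum>i=0..N. g i * bern (N-1) i x)"
      using assms(1) by (simp add: sum.atLeast_Suc_atMost[of 0 N])
    also have "\<dots> = (\<Sum>i<N. g i * bern (N-1) i x)"
      using assms(2) by (simp add: atLeast0AtMost lessThan_Suc_atMost[symmetric] bern_def)
    also have "\<dots> = (\<Sum>i<N. g i * Bernstein (N-1) i x)"
      using assms(2) by (intro sum.cong) (auto simp: bern_eq)
    finally show ?thesis .
  qed
  show ?thesis using 1 2 by (simp add: right_diff_distrib sum_subtractf left_diff_distrib)
qed

lemma sum_shift_y:
  fixes h :: "nat \<Rightarrow> real"
  assumes "h 0 = 0"
  shows "(\<Sum>j=1..N. h j * bern N j y) = (\<Sum>j\<le>N. h j * Bernstein N j y)"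
proof -
  have "(\<Sum>j=1..N. h j * bern N j y) = (\<Sum>j=0..N. h j * bern N j y)"
    using assms by (simp add: sum.atLeast_Suc_atMost[of 0 N])
  also have "\<dots> = (\<Sum>j\<le>N. h j * Bernstein N j y)"
    by (simp add: atLeast0AtMost bern_eq)
  finally show ?thesis .
qed

lemma kernel_rewrite:
  assumes A0: "\<And>t. t\<in>{0..1} \<Longrightarrow> A 0 t = 0" and A0': "\<And>t. t\<in>{0..1} \<Longrightarrow> A t 0 = 0" and N: "N \<ge> 1"
  shows "bernstein_kernel N A x y =
    (\<Sum>i<N. \<Sum>j\<le>N. real N * (A (real (Suc i) / N) (j / N) - A (i / N) (j / N))
         * Bernstein (N-1) i x * Bernstein N j y)"
proof -
  have "bernstein_kernel N A x y = real N * (\<Sum>j=1..N. (\<Sum>i=1..N. A (real i / real N) (real j / real N) *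
        (bern (N - 1) (i - 1) x - bern (N - 1) i x)) * bern N j y)"
    unfolding bernstein_kernel_def
    by (subst sum.swap) (simp add: sum_distrib_right mult.assoc)
  also have "\<dots> = real N * (\<Sum>j=1..N. (\<Sum>i<N. (A (real (Suc i) / N) (j / N) - A (i / N) (j / N)) * Bernstein (N-1) i x) * bern N j y)"
  proof -
    have inner: "(\<Sum>i=1..N. A (real i / real N) (real j / real N) *
        (bern (N - 1) (i - 1) x - bern (N - 1) i x)) = (\<Sum>i<N. (A (real (Suc i) / N) (j / N) - A (i / N) (j / N)) * Bernstein (N-1) i x)"
      if "j \<in> {1..N}" for j
      by (rule sum_shift_x) (use A0 N that in auto)
    show ?thesis
      apply (intro arg_cong[where f="\<lambda>s. real N * s"] sum.cong refl)
      apply (subst inner)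
       apply auto
      done
  qed
  also have "\<dots> = real N * (\<Sum>j\<le>N. (\<Sum>i<N. (A (real (Suc i) / N) (j / N) - A (i / N) (j / N)) * Bernstein (N-1) i x) * Bernstein N j y)"
    by (subst sum_shift_y) (simp_all add: A0' of_nat_0_le_iff)
  also have "\<dots> = (\<Sum>i<N. \<Sum>j\<le>N. real N * (A (real (Suc i) / N) (j / N) - A (i / N) (j / N))
         * Bernstein (N-1) i x * Bernstein N j y)"
    by (subst sum.swap) (simp add: sum_distrib_left sum_distrib_right mult_ac)
  finally show ?thesis .
qed



lemma bern_var:
  assumes "n > 0"
  shows "(\<Sum>k\<le>n. (real k / n - x)\<^sup>2 * Bernstein n k x) = x * (1 - x) / n"
proof -
  have *: "\<And>a b x::real. (a - b)\<^sup>2 * x = a * (a - 1) * x + (1 - 2 * b) * a * x + b * b * x"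
    by (simp add: algebra_simps power2_eq_square)
  have "(\<Sum>k\<le>n. (k - n * x)\<^sup>2 * Bernstein n k x) = n * x * (1 - x)"
    apply (simp add: * sum.distrib)
    apply (simp flip: sum_distrib_left add: mult.assoc)
    apply (simp add: algebra_simps power2_eq_square)
    done
  then have "(\<Sum>k\<le>n. (k - n * x)\<^sup>2 * Bernstein n k x)/n^2 = x * (1 - x) / n"
    by (simp add: power2_eq_square)
  then show ?thesis
    using assms by (simp add: sum_divide_distrib field_split_simps power2_commute)
qed

lemma bern_var_le:
  assumes "n > 0" "0 \<le> x" "x \<le> 1"
  shows "(\<Sum>k\<le>n. (real k / n - x)\<^sup>2 * Bernstein n k x) \<le> 1 / n"
proof -
  have "x * (1 - x) \<le> 1" using assms by (simp add: mult_le_one)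
  then show ?thesis using assms by (simp add: bern_var divide_right_mono)
qed

lemma kernel_props:
  assumes "continuous_markov_kernel_of A K"
  shows "continuous_on ({0..1}\<times>{0..1}) (\<lambda>(x,y). measure (K x) {0..y})"
    and "\<And>x y. x\<in>{0..1} \<Longrightarrow> y\<in>{0..1} \<Longrightarrow> \<bar>measure (K x) {0..y}\<bar> \<le> 1"
    and "\<And>x y. x\<in>{0..1} \<Longrightarrow> y\<in>{0..1} \<Longrightarrow> A x y = integral {0..x} (\<lambda>t. measure (K t) {0..y})"
proof -
  show cont: "continuous_on ({0..1}\<times>{0..1}) (\<lambda>(x,y). measure (K x) {0..y})"
    using assms by (simp add: continuous_markov_kernel_of_def)
  obtain \<mu> where cm: "copula_measure A \<mu>"
    and kp: "\<forall>x\<in>{0..1}. prob_space (K x) \<and> sets (K x) = sets (restrict_space borel {0..1::real})"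
    and int: "\<forall>E1\<in>sets (restrict_space borel {0..1::real}). \<forall>E2\<in>sets (restrict_space borel {0..1::real}).
          (LINT x:E1|lborel. measure (K x) E2) = measure \<mu> (E1 \<times> E2)"
    using assms unfolding continuous_markov_kernel_of_def markov_kernel_of_def by blast
  show "\<bar>measure (K x) {0..y}\<bar> \<le> 1" if "x\<in>{0..1}" "y\<in>{0..1}" for x y
  proof -
    interpret prob_space "K x" using kp that by blast
    show ?thesis by simp
  qed
  have sets: "{0..z} \<in> sets (restrict_space borel {0..1::real})" if "z \<in> {0..1}" for z
    using that by (auto simp: sets_restrict_space_iff)
  show "A x y = integral {0..x} (\<lambda>t. measure (K t) {0..y})" if xy: "x\<in>{0..1}" "y\<in>{0..1}" for x y
  proof -
    have c1: "continuous_on {0..x} (\<lambda>t. measure (K t) {0..y})"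
    proof -
      have "continuous_on {0..x} ((\<lambda>(x,y). measure (K x) {0..y}) \<circ> (\<lambda>t. (t, y)))"
        by (rule continuous_on_compose[OF _ continuous_on_subset[OF cont]])
           (use xy in \<open>auto intro!: continuous_intros\<close>)
      then show ?thesis by (simp add: o_def)
    qed
    have si: "set_integrable lborel {0..x} (\<lambda>t. measure (K t) {0..y})"
      unfolding set_integrable_def by (rule borel_integrable_compact[OF _ c1]) auto
    have "A x y = measure \<mu> ({0..x} \<times> {0..y})"
      using cm xy by (simp add: copula_measure_def)
    also have "\<dots> = (LINT t:{0..x}|lborel. measure (K t) {0..y})"
      using int sets xy by simp
    also have "\<dots> = integral {0..x} (\<lambda>t. measure (K t) {0..y})"
      by (rule set_borel_integral_eq_integral(2)[OF si])
    finally show ?thesis .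
  qed
qed




lemma step_est:
  fixes F :: "real \<Rightarrow> real \<Rightarrow> real"
  assumes rep: "\<And>x y. x\<in>{0..1} \<Longrightarrow> y\<in>{0..1} \<Longrightarrow> A x y = integral {0..x} (\<lambda>t. F t y)"
    and contF: "\<And>y. y\<in>{0..1} \<Longrightarrow> continuous_on {0..1} (\<lambda>t. F t y)"
    and uc: "\<And>s u x y. s\<in>{0..1} \<Longrightarrow> u\<in>{0..1} \<Longrightarrow> x\<in>{0..1} \<Longrightarrow> y\<in>{0..1} \<Longrightarrow>
              \<bar>F s u - F x y\<bar> \<le> e + C*((s-x)\<^sup>2+(u-y)\<^sup>2)"
    and C: "C \<ge> 0" and N: "N \<ge> 2" and x: "x\<in>{0..1}" and y: "y\<in>{0..1}"
    and i: "i < N" and j: "j \<le> N"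
  shows "\<bar>real N * (A (real (Suc i) / N) (j / N) - A (i / N) (j / N)) - F x y\<bar>
     \<le> e + C * (2 * (real i / real (N-1) - x)\<^sup>2 + 2 / (real N)\<^sup>2 + (real j / N - y)\<^sup>2)"
proof -
  define a where "a = real i / N"
  define b where "b = real (Suc i) / N"
  define v where "v = real j / N"
  define c where "c = real i / real (N-1)"
  define B where "B = e + C * (2 * (c - x)\<^sup>2 + 2 / (real N)\<^sup>2 + (v - y)\<^sup>2)"
  have Npos: "real N > 0" using N by simp
  have ab: "0 \<le> a" "a \<le> b" "b \<le> 1" "b - a = 1 / N"
    using i Npos by (auto simp: a_def b_def field_simps diff_divide_distrib)
  have v01: "v \<in> {0..1}" using j Npos by (auto simp: v_def field_simps)
  have N1: "real (N - 1) = real N - 1" using N by simp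
  have ca: "a \<le> c" "c \<le> b"
  proof -
    have "real N - 1 > 0" using N by simp
    then show "a \<le> c" unfolding a_def c_def N1 using Npos
      by (simp add: divide_le_eq le_divide_eq field_simps)
    show "c \<le> b" unfolding b_def c_def N1 using Npos \<open>real N - 1 > 0\<close> i
      by (simp add: divide_le_eq le_divide_eq field_simps)
  qed
  have cv: "continuous_on {0..1} (\<lambda>t. F t v)" using contF v01 by blast
  have intg: "(\<lambda>t. F t v) integrable_on {0..b}"
    by (rule integrable_continuous_real, rule continuous_on_subset[OF cv]) (use ab in auto)
  have "A b v - A a v = integral {a..b} (\<lambda>t. F t v)"
    using rep[of b v] rep[of a v] ab v01 Henstock_Kurzweil_Integration.integral_combine[OF ab(1) ab(2) intg] by auto
  also have "\<dots> = integral {a..b} (\<lambda>t. F t v - F x y) + (b - a) * F x y"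
    using ab
    by (subst integral_diff) (auto intro!: integrable_continuous_real continuous_on_subset[OF cv])
  finally have eq: "real N * (A b v - A a v) - F x y = real N * integral {a..b} (\<lambda>t. F t v - F x y)"
    using ab Npos by (simp add: field_simps)
  have pt: "norm (F t v - F x y) \<le> B" if t: "t \<in> {a..b}" for t
  proof -
    have t01: "t \<in> {0..1}" using t ab by auto
    have "\<bar>t - c\<bar> \<le> 1 / N" using t ca ab by auto
    then have tc: "(t - c)\<^sup>2 \<le> (1 / N)\<^sup>2"
      by (metis abs_le_square_iff abs_of_nonneg less_eq_real_def Npos zero_le_divide_1_iff)
    have "(t - x)\<^sup>2 \<le> 2 * (c - x)\<^sup>2 + 2 / (real N)\<^sup>2"
    proof -
      have sq: "(p + q)\<^sup>2 \<le> 2 * p\<^sup>2 + 2 * q\<^sup>2" for p q :: real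
        using zero_le_power2[of "p - q"] by (simp add: power2_eq_square algebra_simps)
      have "(t - x)\<^sup>2 = ((c - x) + (t - c))\<^sup>2" by simp
      also have "\<dots> \<le> 2 * (c - x)\<^sup>2 + 2 * (t - c)\<^sup>2" by (rule sq)
      also have "\<dots> \<le> 2 * (c - x)\<^sup>2 + 2 * (1 / N)\<^sup>2" using tc by simp
      finally show ?thesis by (simp add: power_divide)
    qed
    then have "(t - x)\<^sup>2 + (v - y)\<^sup>2 \<le> 2 * (c - x)\<^sup>2 + 2 / (real N)\<^sup>2 + (v - y)\<^sup>2" by simp
    then have "C * ((t - x)\<^sup>2 + (v - y)\<^sup>2) \<le> C * (2 * (c - x)\<^sup>2 + 2 / (real N)\<^sup>2 + (v - y)\<^sup>2)"
      using C by (rule mult_left_mono)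
    then show ?thesis using uc[OF t01 v01 x y] by (simp add: B_def)
  qed
  have "norm (integral {a..b} (\<lambda>t. F t v - F x y)) \<le> B * (b - a)"
    by (rule integral_bound[OF ab(2)])
       (use ab pt in \<open>auto intro!: continuous_intros continuous_on_subset[OF cv]\<close>)
  then have "\<bar>real N * integral {a..b} (\<lambda>t. F t v - F x y)\<bar> \<le> B"
    using ab Npos by (simp add: abs_mult field_simps)
  then show ?thesis using eq by (simp add: a_def b_def v_def c_def B_def)
qed




lemma sum_est:
  fixes F :: "real \<Rightarrow> real \<Rightarrow> real"
  assumes A0: "\<And>t. t\<in>{0..1} \<Longrightarrow> A 0 t = 0" and A0': "\<And>t. t\<in>{0..1} \<Longrightarrow> A t 0 = 0"
    and rep: "\<And>x y. x\<in>{0..1} \<Longrightarrow> y\<in>{0..1} \<Longrightarrow> A x y = integral {0..x} (\<lambda>t. F t y)"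
    and contF: "\<And>y. y\<in>{0..1} \<Longrightarrow> continuous_on {0..1} (\<lambda>t. F t y)"
    and uc: "\<And>s u x y. s\<in>{0..1} \<Longrightarrow> u\<in>{0..1} \<Longrightarrow> x\<in>{0..1} \<Longrightarrow> y\<in>{0..1} \<Longrightarrow>
              \<bar>F s u - F x y\<bar> \<le> e + C*((s-x)\<^sup>2+(u-y)\<^sup>2)"
    and C: "C \<ge> 0" and N: "N \<ge> 2" and x: "x\<in>{0..1}" and y: "y\<in>{0..1}"
  shows "\<bar>bernstein_kernel N A x y - F x y\<bar> \<le> e + 5 * C / real (N - 1)"
proof -
  obtain n where n: "N = Suc n" "n \<ge> 1" using N by (cases N) auto
  define D where "D i j = real N * (A (real (Suc i) / N) (j / N) - A (i / N) (j / N))" for i j :: nat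
  define bx where "bx i = Bernstein n i x" for i
  define by' where "by' j = Bernstein N j y" for j
  define P where "P i = e + 2 * C * (real i / real n - x)\<^sup>2 + 2 * C / (real N)\<^sup>2" for i :: nat
  define Q where "Q j = C * (real j / real N - y)\<^sup>2" for j :: nat
  have bx0: "bx i \<ge> 0" for i using x by (simp add: bx_def Bernstein_nonneg)
  have by0: "by' j \<ge> 0" for j using y by (simp add: by'_def Bernstein_nonneg)
  have sbx: "(\<Sum>i<N. bx i) = 1" unfolding n bx_def by (simp add: lessThan_Suc_atMost)
  have sby: "(\<Sum>j\<le>N. by' j) = 1" unfolding by'_def by simp
  have K: "bernstein_kernel N A x y = (\<Sum>i<N. \<Sum>j\<le>N. D i j * bx i * by' j)"
    unfolding D_def bx_def by'_def using kernel_rewrite[of A N x y, OF A0 A0'] N n by simp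
  have Fs: "F x y = (\<Sum>i<N. \<Sum>j\<le>N. F x y * bx i * by' j)"
    by (simp add: sum_distrib_left[symmetric] sum_distrib_right[symmetric] mult.assoc sbx sby)
  have "\<bar>bernstein_kernel N A x y - F x y\<bar> = \<bar>\<Sum>i<N. \<Sum>j\<le>N. (D i j - F x y) * bx i * by' j\<bar>"
    unfolding K by (subst Fs) (simp add: sum_subtractf left_diff_distrib)
  also have "\<dots> \<le> (\<Sum>i<N. \<Sum>j\<le>N. \<bar>(D i j - F x y) * bx i * by' j\<bar>)"
    by (rule order_trans[OF sum_abs sum_mono]) (rule sum_abs)
  also have "\<dots> \<le> (\<Sum>i<N. \<Sum>j\<le>N. (P i + Q j) * bx i * by' j)"
  proof (intro sum_mono)
    fix i j assume i: "i \<in> {..<N}" and j: "j \<in> {..N}"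
    have "\<bar>D i j - F x y\<bar> \<le> P i + Q j"
    proof -
      have Nn: "real (N - 1) = real n" using n by simp
      have "P i + Q j = e + C * (2 * (real i / real (N-1) - x)\<^sup>2 + 2 / (real N)\<^sup>2 + (real j / real N - y)\<^sup>2)"
        unfolding P_def Q_def Nn by (simp add: distrib_left)
      then show ?thesis using step_est[OF rep contF uc C N x y, of i j] i j by (simp add: D_def)
    qed
    then show "\<bar>(D i j - F x y) * bx i * by' j\<bar> \<le> (P i + Q j) * bx i * by' j"
      using bx0 by0 by (simp add: abs_mult mult_right_mono)
  qed
  also have "\<dots> = (\<Sum>i<N. P i * bx i) + (\<Sum>j\<le>N. Q j * by' j)"
  proof -
    have "(\<Sum>i<N. \<Sum>j\<le>N. (P i + Q j) * bx i * by' j)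
        = (\<Sum>i<N. \<Sum>j\<le>N. (P i * bx i) * by' j) + (\<Sum>i<N. \<Sum>j\<le>N. bx i * (Q j * by' j))"
      by (simp add: sum.distrib[symmetric] algebra_simps)
    also have "(\<Sum>i<N. \<Sum>j\<le>N. (P i * bx i) * by' j) = (\<Sum>i<N. P i * bx i)"
      by (simp add: sum_distrib_left[symmetric] sby)
    also have "(\<Sum>i<N. \<Sum>j\<le>N. bx i * (Q j * by' j)) = (\<Sum>j\<le>N. Q j * by' j)"
      by (simp add: sum_distrib_left[symmetric] sum_distrib_right[symmetric] sbx)
    finally show ?thesis .
  qed
  also have "(\<Sum>i<N. P i * bx i) = e + 2 * C / (real N)\<^sup>2 + 2 * C * (\<Sum>i\<le>n. (real i / real n - x)\<^sup>2 * bx i)"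
  proof -
    have "(\<Sum>i<N. P i * bx i) = (\<Sum>i<N. e * bx i + 2 * C / (real N)\<^sup>2 * bx i + 2 * C * ((real i / real n - x)\<^sup>2 * bx i))"
      unfolding P_def by (intro sum.cong refl) (simp add: algebra_simps)
    also have "\<dots> = e * (\<Sum>i<N. bx i) + 2 * C / (real N)\<^sup>2 * (\<Sum>i<N. bx i) + 2 * C * (\<Sum>i<N. (real i / real n - x)\<^sup>2 * bx i)"
      by (simp add: sum.distrib sum_distrib_left)
    also have "(\<Sum>i<N. (real i / real n - x)\<^sup>2 * bx i) = (\<Sum>i\<le>n. (real i / real n - x)\<^sup>2 * bx i)"
      unfolding n by (simp add: lessThan_Suc_atMost)
    finally show ?thesis using sbx by simp
  qed
  also have "(\<Sum>j\<le>N. Q j * by' j) = C * (\<Sum>j\<le>N. (real j / real N - y)\<^sup>2 * by' j)"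
    unfolding Q_def by (simp add: sum_distrib_left mult.assoc)
  also have "e + 2 * C / (real N)\<^sup>2 + 2 * C * (\<Sum>i\<le>n. (real i / real n - x)\<^sup>2 * bx i)
      + C * (\<Sum>j\<le>N. (real j / real N - y)\<^sup>2 * by' j) \<le> e + 2 * C / n + 2 * C * (1 / n) + C * (1 / n)"
  proof -
    have n0: "real n > 0" using n by simp
    have a: "(\<Sum>i\<le>n. (real i / real n - x)\<^sup>2 * bx i) \<le> 1 / n"
      unfolding bx_def using bern_var_le[of n x] n x by simp
    have b0: "(\<Sum>j\<le>N. (real j / real N - y)\<^sup>2 * by' j) \<le> 1 / N"
      unfolding by'_def using bern_var_le[of N y] n y by simp
    have "1 / real N \<le> 1 / real n"
      using n0 unfolding n by (intro divide_left_mono) auto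
    with b0 have b: "(\<Sum>j\<le>N. (real j / real N - y)\<^sup>2 * by' j) \<le> 1 / n" by linarith
    have c: "2 * C / (real N)\<^sup>2 \<le> 2 * C / n"
    proof -
      have "0 \<le> real n * real n" by simp
      then have "real n \<le> (real N)\<^sup>2" unfolding n by (simp add: power2_eq_square algebra_simps)
      moreover have "0 < (real N)\<^sup>2 * real n" using n0 n by simp
      ultimately show ?thesis using C by (intro divide_left_mono) auto
    qed
    have a2: "2 * C * (\<Sum>i\<le>n. (real i / real n - x)\<^sup>2 * bx i) \<le> 2 * C * (1 / n)"
      using a C by (intro mult_left_mono) auto
    have b2: "C * (\<Sum>j\<le>N. (real j / real N - y)\<^sup>2 * by' j) \<le> C * (1 / n)"
      using b C by (intro mult_left_mono) auto
    show ?thesis using a2 b2 c by linarith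
  qed
  also have "\<dots> = e + 5 * C / real (N - 1)" using n by (simp add: field_simps)
  finally show ?thesis by simp
qed




theorem lemma4p1:
  fixes A :: "real \<Rightarrow> real \<Rightarrow> real" and K :: "real \<Rightarrow> real measure"
  assumes "is_copula A"
    and "continuous_markov_kernel_of A K"
  shows "(\<lambda>N. SUP p\<in>{0..1} \<times> {0..1}.
            \<bar>bernstein_kernel N A (fst p) (snd p) - measure (K (fst p)) {0..snd p}\<bar>)
         \<longlonglongrightarrow> 0"
proof -
  define F where "F x y = measure (K x) {0..y}" for x y
  let ?S = "{0..1::real} \<times> {0..1::real}"
  have cont: "continuous_on ?S (\<lambda>(x,y). F x y)"
    using kernel_props(1)[OF assms(2)] by (simp add: F_def)
  have bnd: "\<bar>F x y\<bar> \<le> 1" if "x\<in>{0..1}" "y\<in>{0..1}" for x y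
    using kernel_props(2)[OF assms(2) that] by (simp add: F_def)
  have rep: "A x y = integral {0..x} (\<lambda>t. F t y)" if "x\<in>{0..1}" "y\<in>{0..1}" for x y
    using kernel_props(3)[OF assms(2) that] by (simp add: F_def)
  have contF: "continuous_on {0..1} (\<lambda>t. F t y)" if y: "y\<in>{0..1}" for y
  proof -
    have "continuous_on {0..1} ((\<lambda>(x,y). F x y) \<circ> (\<lambda>t. (t, y)))"
      by (rule continuous_on_compose[OF _ continuous_on_subset[OF cont]])
         (use y in \<open>auto intro!: continuous_intros\<close>)
    then show ?thesis by (simp add: o_def)
  qed
  have A0: "A 0 t = 0" and A0': "A t 0 = 0" if "t\<in>{0..1}" for t
  proof -
    have "\<forall>t\<in>{0..1}. A t 0 = 0 \<and> A 0 t = 0 \<and> A t 1 = t \<and> A 1 t = t"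
      using assms(1) unfolding is_copula_def by (rule conjunct1)
    then show "A 0 t = 0" and "A t 0 = 0" using that by auto
  qed
  have ucf: "uniformly_continuous_on ?S (\<lambda>(x,y). F x y)"
    by (rule compact_uniformly_continuous[OF cont]) (intro compact_Times compact_Icc)
  show ?thesis
  proof (rule LIMSEQ_I)
    fix r :: real assume r: "r > 0"
    define e where "e = r / 3"
    have e: "e > 0" using r by (simp add: e_def)
    obtain d where d: "d > 0" and dd: "\<And>p p'. p \<in> ?S \<Longrightarrow> p' \<in> ?S \<Longrightarrow> dist p' p < d \<Longrightarrow>
        dist ((\<lambda>(x,y). F x y) p') ((\<lambda>(x,y). F x y) p) < e"
      by (rule uniformly_continuous_onE[OF ucf e], rule that)
    define C where "C = 2 / d\<^sup>2"
    have C: "C \<ge> 0" by (simp add: C_def)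
    have uc: "\<bar>F s u - F x y\<bar> \<le> e + C*((s-x)\<^sup>2+(u-y)\<^sup>2)"
      if s: "s\<in>{0..1}" and u: "u\<in>{0..1}" and x: "x\<in>{0..1}" and y: "y\<in>{0..1}" for s u x y
    proof (cases "(s-x)\<^sup>2+(u-y)\<^sup>2 < d\<^sup>2")
      case True
      have "dist (s,u) (x,y) = sqrt ((s-x)\<^sup>2+(u-y)\<^sup>2)"
        by (simp add: dist_Pair_Pair dist_real_def)
      also have "\<dots> < sqrt (d\<^sup>2)" using True real_sqrt_less_iff by blast
      also have "\<dots> = d" using d by simp
      finally have "\<bar>F s u - F x y\<bar> < e"
        using dd[of "(x,y)" "(s,u)"] s u x y by (simp add: dist_real_def)
      moreover have "0 \<le> C*((s-x)\<^sup>2+(u-y)\<^sup>2)" using C by simp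
      ultimately show ?thesis by linarith
    next
      case False
      then have "C * d\<^sup>2 \<le> C*((s-x)\<^sup>2+(u-y)\<^sup>2)" using C by (intro mult_left_mono) auto
      moreover have "C * d\<^sup>2 = 2" using d by (simp add: C_def)
      moreover have "\<bar>F s u - F x y\<bar> \<le> 2" using bnd[OF s u] bnd[OF x y] by linarith
      ultimately show ?thesis using e by linarith
    qed
    obtain M :: nat where M: "real M > 5 * C / e + 2" using reals_Archimedean2 by blast
    show "\<exists>no. \<forall>N\<ge>no. norm ((SUP p\<in>?S. \<bar>bernstein_kernel N A (fst p) (snd p) - measure (K (fst p)) {0..snd p}\<bar>) - 0) < r"
    proof (intro exI allI impI)
      fix N assume NM: "M \<le> N"
      have "5 * C / e \<ge> 0" using C e by simp
      then have "real N > 2" using NM M by (smt (verit) of_nat_le_iff)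
      then have N2: "N \<ge> 2" by linarith
      have N1: "real (N - 1) = real N - 1" using N2 by simp
      have "real N - 1 > 5 * C / e" using NM M by linarith
      then have "5 * C < (real N - 1) * e" using e by (simp add: pos_divide_less_eq)
      moreover have "real N - 1 > 0" using N2 by simp
      ultimately have small: "5 * C / real (N - 1) < e"
        unfolding N1 by (simp add: pos_divide_less_eq mult.commute)
      define bound where "bound = e + 5 * C / real (N - 1)"
      have pt: "\<bar>bernstein_kernel N A (fst p) (snd p) - measure (K (fst p)) {0..snd p}\<bar> \<le> bound"
        if "p \<in> ?S" for p
        using sum_est[of A F e C N "fst p" "snd p", OF A0 A0' rep contF uc C N2] that
        by (auto simp: F_def bound_def)
      have ne: "?S \<noteq> {}" by auto
      have bdd: "bdd_above ((\<lambda>p. \<bar>bernstein_kernel N A (fst p) (snd p) - measure (K (fst p)) {0..snd p}\<bar>) ` ?S)"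
        by (rule bdd_aboveI2[where M=bound]) (use pt in blast)
      have le: "(SUP p\<in>?S. \<bar>bernstein_kernel N A (fst p) (snd p) - measure (K (fst p)) {0..snd p}\<bar>) \<le> bound"
        using pt ne by (intro cSUP_least) auto
      have ge: "0 \<le> (SUP p\<in>?S. \<bar>bernstein_kernel N A (fst p) (snd p) - measure (K (fst p)) {0..snd p}\<bar>)"
        using cSUP_upper2[OF bdd, of "(0,0)"] by auto
      show "norm ((SUP p\<in>?S. \<bar>bernstein_kernel N A (fst p) (snd p) - measure (K (fst p)) {0..snd p}\<bar>) - 0) < r"
        using le ge small by (simp add: bound_def e_def)
    qed
  qed
qed


end
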